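(* If $S$ is a MANS-semigroup and $\mathrm{e}(S)=3$, then there exist $m,a,b,t\in\mathbb{N}$ such that $m\geq 3$, $a\geq 1$, $t\in\{2,\ldots,m-1\}$, $(t-1)(am+1)<bm+t<t(am+1)$, and $(\mathrm{m}(S),\mathrm{r}(S),\mathrm{M}(S))=(m,\ am+1,\ bm+t)$.
   Context: $\mathbb{N}=\{0,1,2,\ldots\}$. A numerical semigroup is a subset $S\subseteq\mathbb{N}$ closed under addition, containing $0$, with $\mathbb{N}\setminus S$ finite. It has a unique finite minimal system of generators $\mathrm{msg}(S)=\{n_1<\cdots<n_e\}$; $\mathrm{e}(S)=e$, $\mathrm{m}(S)=n_1$ (multiplicity), $\mathrm{r}(S)=n_2$ (ratio), $\mathrm{M}(S)=n_e$. $S$ is a MANS-semigroup if $w(1)<w(2)<\cdots<w(\mathrm{m}(S)-1)$, where $w(i)$ is the least element of $S$ congruent to $i$ modulo $\mathrm{m}(S)$. *)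

theory Defs
  imports Main
begin

definition numerical_semigroup :: "nat set \<Rightarrow> bool" where
  "numerical_semigroup S \<longleftrightarrow> 0 \<in> S \<and> (\<forall>x\<in>S. \<forall>y\<in>S. x + y \<in> S) \<and> finite (UNIV - S)"

text \<open>Minimal system of generators: the nonzero elements of S that are not a sum of two
  nonzero elements of S (standard characterisation of msg(S) for numerical semigroups).\<close>
definition msg :: "nat set \<Rightarrow> nat set" where
  "msg S = {x \<in> S. x \<noteq> 0 \<and> \<not> (\<exists>y\<in>S. \<exists>z\<in>S. y \<noteq> 0 \<and> z \<noteq> 0 \<and> x = y + z)}"

definition embdim :: "nat set \<Rightarrow> nat" where
  "embdim S = card (msg S)"

definition multiplicity :: "nat set \<Rightarrow> nat" where
  "multiplicity S = Min (msg S)"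

definition ratio :: "nat set \<Rightarrow> nat" where
  "ratio S = Min (msg S - {multiplicity S})"

definition maxgen :: "nat set \<Rightarrow> nat" where
  "maxgen S = Max (msg S)"

definition apery_w :: "nat set \<Rightarrow> nat \<Rightarrow> nat" where
  "apery_w S i = (LEAST s. s \<in> S \<and> s mod multiplicity S = i mod multiplicity S)"

definition MANS :: "nat set \<Rightarrow> bool" where
  "MANS S \<longleftrightarrow> numerical_semigroup S \<and>
     (\<forall>i j. 1 \<le> i \<and> i < j \<and> j \<le> multiplicity S - 1 \<longrightarrow> apery_w S i < apery_w S j)"

end

theory Submission
  imports Defs
begin

lemma three_sort:
  fixes x y z :: nat
  assumes "x \<noteq> y" "y \<noteq> z" "x \<noteq> z"
  shows "\<exists>a b c. a < b \<and> b < c \<and> {x,y,z} = {a,b,c}"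
proof -
  have "(x<y \<and> y<z) \<or> (x<z \<and> z<y) \<or> (y<x \<and> x<z) \<or> (y<z \<and> z<x) \<or> (z<x \<and> x<y) \<or> (z<y \<and> y<x)"
    using assms by auto
  then show ?thesis
  proof (elim disjE)
    assume "x<y \<and> y<z" then show ?thesis by blast
  next
    assume "x<z \<and> z<y" then show ?thesis by (intro exI[of _ x] exI[of _ z] exI[of _ y]) auto
  next
    assume "y<x \<and> x<z" then show ?thesis by (intro exI[of _ y] exI[of _ x] exI[of _ z]) auto
  next
    assume "y<z \<and> z<x" then show ?thesis by (intro exI[of _ y] exI[of _ z] exI[of _ x]) auto
  next
    assume "z<x \<and> x<y" then show ?thesis by (intro exI[of _ z] exI[of _ x] exI[of _ y]) auto
  next
    assume "z<y \<and> y<x" then show ?thesis by (intro exI[of _ z] exI[of _ y] exI[of _ x]) auto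
  qed
qed

lemma repr:
  assumes ns: "numerical_semigroup S" and g: "msg S = {m, r, M}" and s: "s \<in> S"
  shows "\<exists>x y z. s = x*m + y*r + z*M"
  using s
proof (induction s rule: less_induct)
  case (less s)
  show ?case
  proof (cases "s = 0")
    case True then show ?thesis by (intro exI[of _ 0]) auto
  next
    case False
    show ?thesis
    proof (cases "s \<in> msg S")
      case True
      then have "s = m \<or> s = r \<or> s = M" using g by auto
      then show ?thesis
        by (metis add_0 mult_1 mult_zero_left add.right_neutral)
    next
      case nm: False
      then obtain y z where yz: "y \<in> S" "z \<in> S" "y \<noteq> 0" "z \<noteq> 0" "s = y + z"
        using less.prems False unfolding msg_def by auto
      then obtain x1 y1 z1 where 1: "y = x1*m + y1*r + z1*M" using less.IH[of y] by auto
      obtain x2 y2 z2 where 2: "z = x2*m + y2*r + z2*M" using less.IH[of z] yz by auto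
      have "s = (x1+x2)*m + (y1+y2)*r + (z1+z2)*M" using 1 2 yz(5) by (simp add: algebra_simps)
      then show ?thesis by blast
    qed
  qed
qed

lemma mult_in:
  assumes ns: "numerical_semigroup S" and "a \<in> S"
  shows "k*a \<in> S"
proof (induction k)
  case 0 then show ?case using ns unfolding numerical_semigroup_def by auto
next
  case (Suc k) then show ?case using ns assms(2) unfolding numerical_semigroup_def by auto
qed

lemma add_in:
  assumes ns: "numerical_semigroup S" and "a \<in> S" "b \<in> S"
  shows "a + b \<in> S"
  using assms unfolding numerical_semigroup_def by auto

lemma cofinite_in:
  assumes ns: "numerical_semigroup S"
  shows "\<exists>N. \<forall>n\<ge>N. n \<in> S"
proof -
  have f: "finite (UNIV - S)" using ns unfolding numerical_semigroup_def by auto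
  obtain N where "\<forall>n\<in>UNIV - S. n < N"
    using f finite_nat_set_iff_bounded by blast
  then have "\<forall>n\<ge>N. n \<in> S" by (metis DiffI UNIV_I not_le)
  then show ?thesis by blast
qed

theorem proposition3p1:
  fixes S :: "nat set"
  assumes "MANS S" and "embdim S = 3"
  shows "\<exists>m a b t :: nat. m \<ge> 3 \<and> a \<ge> 1 \<and> t \<in> {2..m-1} \<and>
           (t - 1) * (a * m + 1) < b * m + t \<and> b * m + t < t * (a * m + 1) \<and>
           (multiplicity S, ratio S, maxgen S) = (m, a * m + 1, b * m + t)"
proof -
  have ns: "numerical_semigroup S" using assms(1) unfolding MANS_def by auto
  have mono: "\<And>i j. 1 \<le> i \<Longrightarrow> i < j \<Longrightarrow> j \<le> multiplicity S - 1 \<Longrightarrow> apery_w S i < apery_w S j"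
    using assms(1) unfolding MANS_def by auto
  have "card (msg S) = 3" using assms(2) unfolding embdim_def .
  then obtain x y z where "msg S = {x,y,z}" "x \<noteq> y" "y \<noteq> z" "x \<noteq> z"
    by (auto simp: card_3_iff)
  then obtain m r M where g: "msg S = {m, r, M}" and o: "m < r" "r < M"
    using three_sort by metis
  have mult: "multiplicity S = m" unfolding multiplicity_def g using o by simp
  have rat: "ratio S = r" unfolding ratio_def mult g using o by simp
  have mx: "maxgen S = M" unfolding maxgen_def g using o by simp
  have inS: "m \<in> S" "r \<in> S" "M \<in> S" using g unfolding msg_def by auto
  have minimal: "\<And>u v. g0 \<in> msg S \<Longrightarrow> u \<in> S \<Longrightarrow> v \<in> S \<Longrightarrow> u \<noteq> 0 \<Longrightarrow> v \<noteq> 0 \<Longrightarrow> g0 \<noteq> u + v" for g0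
    unfolding msg_def by auto
  have m0: "m \<noteq> 0" using g unfolding msg_def by auto
  have comb: "x*m + y*r + z*M \<in> S" for x y z
    using add_in[OF ns] mult_in[OF ns] inS by metis
  have rep: "\<And>s. s \<in> S \<Longrightarrow> \<exists>x y z. s = x*m + y*r + z*M" using repr[OF ns g] by blast
  have rm0: "r mod m \<noteq> 0"
  proof
    assume h: "r mod m = 0"
    then obtain k where k: "r = k*m" by (metis dvd_def mod_eq_0_iff_dvd mult.commute)
    then have "k \<ge> 2" using o m0 by (cases k; cases "k - 1") auto
    then have "r = m + (k-1)*m" using k by (cases k) auto
    moreover have "(k-1)*m \<in> S" "(k-1)*m \<noteq> 0" using mult_in[OF ns inS(1)] \<open>k \<ge> 2\<close> m0 by auto
    ultimately show False using minimal[of r m "(k-1)*m"] g inS m0 by auto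
  qed
  have m2: "m \<ge> 2" using rm0 m0 by (cases "m = 1") auto
  obtain N where N: "\<forall>n\<ge>N. n \<in> S" using cofinite_in[OF ns] by blast
  have lowb: "s \<ge> r" if sS: "s \<in> S" and smod: "s mod m \<noteq> 0" for s
  proof -
    obtain x y z where s: "s = x*m + y*r + z*M" using rep sS by blast
    have "y \<noteq> 0 \<or> z \<noteq> 0" using s smod by (cases y; cases z) auto
    then show ?thesis
    proof
      assume "y \<noteq> 0" then have "y*r \<ge> r" by simp
      then show ?thesis using s by linarith
    next
      assume "z \<noteq> 0" then have "z*M \<ge> M" by simp
      then show ?thesis using s o by linarith
    qed
  qed
  have r1: "r mod m = 1"
  proof (rule ccontr)
    assume ne: "r mod m \<noteq> 1"
    let ?i = "r mod m"
    have "?i < m" using m0 by simp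
    then have i: "1 < ?i" "?i \<le> m - 1" using ne rm0 by linarith+
    have "apery_w S 1 < apery_w S ?i" using mono[of 1 ?i] i mult by auto
    moreover have "apery_w S ?i \<le> r" unfolding apery_w_def mult
      by (rule Least_le) (use inS in auto)
    moreover have "apery_w S 1 \<in> S \<and> apery_w S 1 mod m = 1 mod m" unfolding apery_w_def mult
    proof (rule LeastI)
      have "1 \<le> m" using m0 by simp
      then have "N*1 \<le> N*m" by (rule mult_le_mono2)
      then have "N \<le> N*m+1" by linarith
      then have "N*m+1 \<in> S" using N by blast
      moreover have "(N*m+1) mod m = 1 mod m" by (rule mod_mult_self3)
      ultimately show "N*m+1 \<in> S \<and> (N*m+1) mod m = 1 mod m" by blast
    qed
    then have "apery_w S 1 \<ge> r" using lowb[of "apery_w S 1"] m2 by simp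
    ultimately show False by auto
  qed
  define a where "a = r div m"
  have ra: "r = a*m + 1" using r1 div_mult_mod_eq[of r m] unfolding a_def by simp
  have a1: "a \<ge> 1" using ra o m0 by (cases a) auto
  define t where "t = M mod m"
  define b where "b = M div m"
  have Mbt: "M = b*m + t" unfolding b_def t_def by simp
  have t0: "t \<noteq> 0"
  proof
    assume h: "t = 0"
    then have "b \<noteq> 0" using Mbt o by (cases b) auto
    then have "b*m = m + (b-1)*m" by (metis Suc_diff_1 neq0_conv mult_Suc)
    then have "M = m + (b-1)*m" using Mbt h by simp
    moreover have "(b-1)*m \<in> S" using mult_in[OF ns inS(1)] by auto
    moreover have "(b-1)*m \<noteq> 0" using Mbt h o m0 calculation(1) by auto
    moreover have "M \<in> msg S" using g by auto
    ultimately show False using minimal[of M "m" "(b-1)*m"] inS(1) m0 by blast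
  qed
  have t1: "t \<noteq> 1"
  proof
    assume h: "t = 1"
    have "a*m < b*m" using Mbt ra o h by simp
    then have "b > a" by (simp add: mult_less_cancel2)
    have "(b-a)*m = b*m - a*m" by (simp add: diff_mult_distrib)
    then have "M = r + (b-a)*m" using Mbt ra h \<open>a*m < b*m\<close> by linarith
    moreover have "(b-a)*m \<in> S" using mult_in[OF ns inS(1)] by auto
    moreover have "(b-a)*m \<noteq> 0" using \<open>b > a\<close> m0 by auto
    moreover have "M \<in> msg S" using g by auto
    moreover have "r \<noteq> 0" using o by simp
    ultimately show False using minimal[of M "r" "(b-a)*m"] inS(2) by blast
  qed
  have tm: "t < m" unfolding t_def using m0 by simp
  have t2: "t \<ge> 2" using t0 t1 by auto
  have m3: "m \<ge> 3" using t2 tm by auto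
  have modc: "(x*m + y*r) mod m = y mod m" for x y
  proof -
    have "x*m + y*r = (x + y*a)*m + y" using ra by (simp add: algebra_simps)
    then show ?thesis by simp
  qed
  have upper: "M < t*r"
  proof (rule ccontr)
    assume "\<not> M < t*r"
    then have ge: "M \<ge> t*r" by simp
    have tr: "t*r = t*a*m + t" using ra by (simp add: algebra_simps)
    have "b*m + t \<ge> t*a*m + t" using ge Mbt tr by linarith
    then have "b*m \<ge> (t*a)*m" by (simp add: mult.assoc)
    then have bta: "b \<ge> t*a" using m0 by simp
    have "r + (t-1)*r = t*r" using t2 by (cases t) auto
    then have e1: "r + (t-1)*r = t*a*m + t" using tr by linarith
    have d1: "(b - t*a)*m = b*m - t*a*m" by (simp add: diff_mult_distrib)
    have d2: "t*a*m \<le> b*m" using bta by (rule mult_le_mono1)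
    have e2: "(b - t*a)*m + t*a*m = b*m" using d1 d2 by linarith
    have "M = r + ((b - t*a)*m + (t-1)*r + 0*M)" using e1 e2 Mbt by linarith
    moreover have "(b - t*a)*m + (t-1)*r + 0*M \<noteq> 0" using t2 o by auto
    moreover have "(b - t*a)*m + (t-1)*r + 0*M \<in> S" by (rule comb)
    moreover have "M \<in> msg S" using g by auto
    moreover have "r \<noteq> 0" using o by simp
    ultimately show False using minimal[of M "r"] inS(2) by blast
  qed
  have wt: "apery_w S t \<le> M" unfolding apery_w_def mult
    by (rule Least_le) (use inS t_def in auto)
  have wlt: "apery_w S (t-1) < apery_w S t" using mono[of "t-1" t] t2 tm mult by auto
  have "apery_w S (t-1) \<in> S \<and> apery_w S (t-1) mod m = (t-1) mod m" unfolding apery_w_def mult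
  proof (rule LeastI)
    show "(t-1)*r \<in> S \<and> ((t-1)*r) mod m = (t-1) mod m" using comb[of 0 "t-1" 0] modc[of 0 "t-1"] by simp
  qed
  then have wS: "apery_w S (t-1) \<in> S" and wm: "apery_w S (t-1) mod m = t-1" using tm by auto
  then obtain x y z where w: "apery_w S (t-1) = x*m + y*r + z*M"
    using rep by blast
  have z0: "z = 0"
  proof (rule ccontr)
    assume "z \<noteq> 0"
    then have "z*M \<ge> M" by simp
    then show False using w wt wlt by linarith
  qed
  have "y mod m = t-1" using wm w z0 modc by simp
  then have "y \<ge> t-1" by (metis mod_less_eq_dividend)
  then have "(t-1)*r \<le> apery_w S (t-1)" proof -
    have "(t-1)*r \<le> y*r" using \<open>y \<ge> t-1\<close> by (simp add: mult_le_mono1)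
    then show ?thesis using w by linarith
  qed
  then have lower: "(t-1)*r < M" using wt wlt by linarith
  show ?thesis
    apply (rule exI[of _ m], rule exI[of _ a], rule exI[of _ b], rule exI[of _ t])
    using m3 a1 t2 tm lower upper by (simp only: mult rat mx Mbt[symmetric] ra[symmetric]) simp
qed

end
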